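(* Let $\{A,B,C,D\}$ be a Descartes configuration in $\mathbb{R}^2$ in which every disk has integral symbol (all of $\dot x,\dot y$, curvature, co-curvature are integers) and the tangency spinor of each of the six pairs of disks is a Gaussian integer. Then: (a) if $D'$ is the Descartes conjugate of $D$ with respect to $A,B,C$, the Descartes configuration $\{A,B,C,D'\}$ again has integral symbols (indeed the symbols satisfy $\mathbf D+\mathbf D'=2(\mathbf A+\mathbf B+\mathbf C)$ entrywise) and Gaussian-integer tangency spinors for all six pairs; (b) the image of the configuration under inversion in the boundary circle of $A$ — whose disks have symbols $-\mathbf A$, $\mathbf B+2\mathbf A$, $\mathbf C+2\mathbf A$, $\mathbf D+2\mathbf A$ — again has integral symbols and Gaussian-integer tangency spinors for all six pairs.
   Context: A (generalized) disk in $\mathbb{R}^2$ is one of: (i) a closed round disk of radius $r>0$ with center $(x,y)$, curvature $A=1/r$; (ii) the closure of the complement of an open round disk of radius $r>0$ with center $(x,y)$, curvature $A=-1/r$; (iii) a closed half-plane $\{p: p\cdot n\ge h\}$, $|n|=1$, curvature $0$. A disk and its curvature are denoted by the same letter. The symbol of a disk $A$ is the vector $\mathbf A=(\dot x_A,\dot y_A,A,A^c)$ where in cases (i),(ii) $\dot x_A=Ax$, $\dot y_A=Ay$, $A^c=(\dot x_A^2+\dot y_A^2-1)/A$, and in case (iii) $(\dot x_A,\dot y_A)=n$, $A^c=2h$. Two disks are tangent if their interiors are disjoint and their boundaries meet in exactly one point (or they are half-planes with disjoint interiors and parallel boundaries). For tangent disks $A,B$ the tangency spinor is defined up to sign by $\mathrm{spin}(A,B)^2=(A\dot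 x_B-B\dot x_A)+i(A\dot y_B-B\dot y_A)$. A Descartes configuration is a set of four pairwise tangent disks with pairwise disjoint interiors; given three of them, the other disk tangent to all three with interior disjoint from them is the Descartes conjugate of the fourth. *)

theory Defs
  imports "HOL-Analysis.Analysis"
begin

datatype gdisk = Disk complex real | CoDisk complex real | HalfPlane complex real

fun valid_gdisk :: "gdisk \<Rightarrow> bool" where
  "valid_gdisk (Disk c r) = (r > 0)"
| "valid_gdisk (CoDisk c r) = (r > 0)"
| "valid_gdisk (HalfPlane n h) = (norm n = 1)"

fun gset :: "gdisk \<Rightarrow> complex set" where
  "gset (Disk c r) = cball c r"
| "gset (CoDisk c r) = closure (- ball c r)"
| "gset (HalfPlane n h) = {p. inner p n \<ge> h}"

fun curv :: "gdisk \<Rightarrow> real" where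
  "curv (Disk c r) = 1 / r"
| "curv (CoDisk c r) = - 1 / r"
| "curv (HalfPlane n h) = 0"

text \<open>Symbol (xdot, ydot, curvature, co-curvature).\<close>
fun symbol :: "gdisk \<Rightarrow> real \<times> real \<times> real \<times> real" where
  "symbol (Disk c r) =
     (let a = 1 / r; x = a * Re c; y = a * Im c in (x, y, a, (x\<^sup>2 + y\<^sup>2 - 1) / a))"
| "symbol (CoDisk c r) =
     (let a = - 1 / r; x = a * Re c; y = a * Im c in (x, y, a, (x\<^sup>2 + y\<^sup>2 - 1) / a))"
| "symbol (HalfPlane n h) = (Re n, Im n, 0, 2 * h)"

definition xdot :: "gdisk \<Rightarrow> real" where "xdot D = fst (symbol D)"
definition ydot :: "gdisk \<Rightarrow> real" where "ydot D = fst (snd (symbol D))"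

definition integral_symbol :: "gdisk \<Rightarrow> bool" where
  "integral_symbol D \<longleftrightarrow>
     (case symbol D of (x, y, a, ac) \<Rightarrow> x \<in> \<int> \<and> y \<in> \<int> \<and> a \<in> \<int> \<and> ac \<in> \<int>)"

definition is_halfplane :: "gdisk \<Rightarrow> bool" where
  "is_halfplane D \<longleftrightarrow> (\<exists>n h. D = HalfPlane n h)"

fun normal :: "gdisk \<Rightarrow> complex" where
  "normal (HalfPlane n h) = n"
| "normal _ = 0"

definition tangent :: "gdisk \<Rightarrow> gdisk \<Rightarrow> bool" where
  "tangent A B \<longleftrightarrow>
     interior (gset A) \<inter> interior (gset B) = {} \<and>
     ((\<exists>!p. p \<in> frontier (gset A) \<inter> frontier (gset B)) \<or>
      (is_halfplane A \<and> is_halfplane B \<and> (normal B = normal A \<or> normal B = - normal A)))"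

definition descartes_config :: "gdisk \<Rightarrow> gdisk \<Rightarrow> gdisk \<Rightarrow> gdisk \<Rightarrow> bool" where
  "descartes_config A B C D \<longleftrightarrow>
     valid_gdisk A \<and> valid_gdisk B \<and> valid_gdisk C \<and> valid_gdisk D \<and>
     tangent A B \<and> tangent A C \<and> tangent A D \<and>
     tangent B C \<and> tangent B D \<and> tangent C D"

definition descartes_conjugate :: "gdisk \<Rightarrow> gdisk \<Rightarrow> gdisk \<Rightarrow> gdisk \<Rightarrow> gdisk \<Rightarrow> bool" where
  "descartes_conjugate A B C D D' \<longleftrightarrow>
     valid_gdisk D' \<and> tangent A D' \<and> tangent B D' \<and> tangent C D' \<and> gset D' \<noteq> gset D"

text \<open>The square of the tangency spinor spin(A,B).\<close>
definition spin_sq :: "gdisk \<Rightarrow> gdisk \<Rightarrow> complex" where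
  "spin_sq A B = Complex (curv A * xdot B - curv B * xdot A) (curv A * ydot B - curv B * ydot A)"

definition gaussian_int :: "complex \<Rightarrow> bool" where
  "gaussian_int z \<longleftrightarrow> Re z \<in> \<int> \<and> Im z \<in> \<int>"

text \<open>The tangency spinor (defined up to sign) is a Gaussian integer.\<close>
definition gaussian_spinor :: "gdisk \<Rightarrow> gdisk \<Rightarrow> bool" where
  "gaussian_spinor A B \<longleftrightarrow> (\<exists>s. gaussian_int s \<and> s\<^sup>2 = spin_sq A B)"

definition all_spinors_gaussian :: "gdisk \<Rightarrow> gdisk \<Rightarrow> gdisk \<Rightarrow> gdisk \<Rightarrow> bool" where
  "all_spinors_gaussian A B C D \<longleftrightarrow>
     gaussian_spinor A B \<and> gaussian_spinor A C \<and> gaussian_spinor A D \<and>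
     gaussian_spinor B C \<and> gaussian_spinor B D \<and> gaussian_spinor C D"

text \<open>The centre of inversion (mapped to infinity) is removed and
  the image is closed up.\<close>
fun inversion_image :: "gdisk \<Rightarrow> complex set \<Rightarrow> complex set" where
  "inversion_image (Disk c r) S = closure ((\<lambda>p. c + (r\<^sup>2) / cnj (p - c)) ` (S - {c}))"
| "inversion_image (CoDisk c r) S = closure ((\<lambda>p. c + (r\<^sup>2) / cnj (p - c)) ` (S - {c}))"
| "inversion_image (HalfPlane n h) S = (\<lambda>p. p - (2 * (inner p n - h)) *\<^sub>R n) ` S"

end

theory Submission
  imports Defs
begin


type_synonym q4 = "real \<times> real \<times> real \<times> real"
definition cx :: "q4 \<Rightarrow> real" where "cx t = fst t"
definition cy :: "q4 \<Rightarrow> real" where "cy t = fst (snd t)"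
definition ca :: "q4 \<Rightarrow> real" where "ca t = fst (snd (snd t))"
definition cc :: "q4 \<Rightarrow> real" where "cc t = snd (snd (snd t))"
definition vv :: "q4 \<Rightarrow> complex" where "vv t = Complex (cx t) (cy t)"
definition Lq :: "q4 \<Rightarrow> q4 \<Rightarrow> real" where
  "Lq t u = cx t * cx u + cy t * cy u - (ca t * cc u + ca u * cc t) / 2"
definition sp :: "q4 \<Rightarrow> q4 \<Rightarrow> complex" where
  "sp t u = of_real (ca t) * vv u - of_real (ca u) * vv t"

lemma q4_eq: "t = u \<longleftrightarrow> cx t = cx u \<and> cy t = cy u \<and> ca t = ca u \<and> cc t = cc u"
  by (cases t; cases u) (auto simp: cx_def cy_def ca_def cc_def)

lemma q4_ops [simp]:
  "cx (t + u) = cx t + cx u" "cy (t + u) = cy t + cy u" "ca (t + u) = ca t + ca u" "cc (t + u) = cc t + cc u"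
  "cx (t - u) = cx t - cx u" "cy (t - u) = cy t - cy u" "ca (t - u) = ca t - ca u" "cc (t - u) = cc t - cc u"
  "cx (- t) = - cx t" "cy (- t) = - cy t" "ca (- t) = - ca t" "cc (- t) = - cc t"
  "cx (r *\<^sub>R t) = r * cx t" "cy (r *\<^sub>R t) = r * cy t" "ca (r *\<^sub>R t) = r * ca t" "cc (r *\<^sub>R t) = r * cc t"
  "cx 0 = 0" "cy 0 = 0" "ca 0 = 0" "cc 0 = 0"
  by (simp_all add: cx_def cy_def ca_def cc_def)

lemma q4_tuple [simp]: "cx (x,y,a,c) = x" "cy (x,y,a,c) = y" "ca (x,y,a,c) = a" "cc (x,y,a,c) = c"
  by (simp_all add: cx_def cy_def ca_def cc_def)

lemma Lq_sym: "Lq t u = Lq u t" by (simp add: Lq_def algebra_simps)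

lemma sp_anti: "sp t u = - sp u t" by (simp add: sp_def)

lemma TN_real:
  assumes "Lq t t = 1" "Lq u u = 1" "Lq t u = -1"
  shows "(ca t * cx u - ca u * cx t)^2 + (ca t * cy u - ca u * cy t)^2 = (ca t + ca u)^2"
proof -
  have "(ca t * cx u - ca u * cx t)^2 + (ca t * cy u - ca u * cy t)^2 - (ca t + ca u)^2
     = (ca t)^2 * (Lq u u - 1) + (ca u)^2 * (Lq t t - 1) - 2 * ca t * ca u * (Lq t u + 1)"
    by (simp add: Lq_def) algebra
  then show ?thesis using assms by simp
qed

lemma TN: assumes "Lq t t = 1" "Lq u u = 1" "Lq t u = -1"
  shows "sp t u * cnj (sp t u) = of_real ((ca t + ca u)^2)"
proof -
  have "sp t u = Complex (ca t * cx u - ca u * cx t) (ca t * cy u - ca u * cy t)"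
    by (simp add: sp_def vv_def complex_eq_iff)
  then show ?thesis using TN_real[OF assms] by (simp add: complex_mult_cnj)
qed

lemma TR_real:
  assumes "Lq p p = 1" "Lq x x = 1" "Lq y y = 1" "Lq p x = -1" "Lq p y = -1" "Lq x y = -1"
  shows "(ca p * cx x - ca x * cx p) * (ca p * cx y - ca y * cx p) + (ca p * cy x - ca x * cy p) * (ca p * cy y - ca y * cy p)
     = ca p * ca x + ca p * ca y + ca x * ca y - (ca p)^2"
proof -
  have "(ca p * cx x - ca x * cx p) * (ca p * cx y - ca y * cx p) + (ca p * cy x - ca x * cy p) * (ca p * cy y - ca y * cy p)
     - (ca p * ca x + ca p * ca y + ca x * ca y - (ca p)^2)
    = (ca p)^2 * (Lq x y + 1) - ca p * ca y * (Lq p x + 1) - ca p * ca x * (Lq p y + 1) + ca x * ca y * (Lq p p - 1)"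
    by (simp add: Lq_def) algebra
  then show ?thesis using assms by simp
qed

lemma TR: assumes "Lq p p = 1" "Lq x x = 1" "Lq y y = 1" "Lq p x = -1" "Lq p y = -1" "Lq x y = -1"
  shows "sp p x * cnj (sp p y) + cnj (sp p x) * sp p y = of_real (2 * (ca p * ca x + ca p * ca y + ca x * ca y - (ca p)^2))"
proof -
  have "sp p x * cnj (sp p y) + cnj (sp p x) * sp p y = of_real (2 * ((ca p * cx x - ca x * cx p) * (ca p * cx y - ca y * cx p) + (ca p * cy x - ca x * cy p) * (ca p * cy y - ca y * cy p)))"
    by (simp add: sp_def vv_def complex_eq_iff algebra_simps)
  then show ?thesis using TR_real[OF assms] by simp
qed

lemma TP: "of_real (ca p) * sp x y = of_real (ca x) * sp p y - of_real (ca y) * sp p x"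
  by (simp add: sp_def algebra_simps)

lemma pivot_alg:
  fixes Sa Sb Sc :: complex and p x y :: real
  assumes "of_real p * Sc = of_real x * Sb - of_real y * Sa"
    "Sa * cnj Sa = of_real ((p + x)^2)" "Sb * cnj Sb = of_real ((p + y)^2)"
    "Sa * cnj Sb + cnj Sa * Sb = of_real (2 * (p*x + p*y + x*y - p^2))"
  shows "of_real (p^2) * ((Sc - Sa + Sb)^2 + 4 * Sa * Sb) = 0"
proof -
  have "of_real (p^2) * ((Sc - Sa + Sb)^2 + 4 * Sa * Sb)
      = (of_real p * Sc - of_real p * Sa + of_real p * Sb)^2 + 4 * of_real (p^2) * Sa * Sb"
    by (simp add: algebra_simps power2_eq_square)
  also have "\<dots> = (of_real x * Sb - of_real y * Sa - of_real p * Sa + of_real p * Sb)^2 + 4 * of_real (p^2) * Sa * Sb"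
    using assms(1) by simp
  also have "\<dots> = Sb^2 * (of_real ((p + x)^2) - Sa * cnj Sa) + Sa^2 * (of_real ((p + y)^2) - Sb * cnj Sb)
      + Sa * Sb * (Sa * cnj Sb + cnj Sa * Sb - of_real (2 * (p*x + p*y + x*y - p^2)))"
    by (simp add: algebra_simps power2_eq_square)
  also have "\<dots> = 0" using assms(2-4) by simp
  finally show ?thesis .
qed

lemma not_all_flat:
  assumes "Lq p p = 1" "Lq x x = 1" "Lq y y = 1" "Lq p x = -1" "Lq p y = -1" "Lq x y = -1"
  shows "(ca p)^2 + (ca x)^2 + (ca y)^2 \<noteq> 0"
proof
  assume "(ca p)^2 + (ca x)^2 + (ca y)^2 = 0"
  then have z: "ca p = 0" "ca x = 0" "ca y = 0" by (auto simp: power2_eq_square add_nonneg_eq_0_iff)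
  have "(cx p + cx x)^2 + (cy p + cy x)^2 = Lq p p + Lq x x + 2 * Lq p x"
    using z by (simp add: Lq_def power2_eq_square algebra_simps)
  then have "(cx p + cx x)^2 + (cy p + cy x)^2 = 0" using assms by simp
  then have e1: "cx x = - cx p" "cy x = - cy p" by (auto simp: power2_eq_square add_nonneg_eq_0_iff)
  have "(cx p + cx y)^2 + (cy p + cy y)^2 = Lq p p + Lq y y + 2 * Lq p y"
    using z by (simp add: Lq_def power2_eq_square algebra_simps)
  then have "(cx p + cx y)^2 + (cy p + cy y)^2 = 0" using assms by simp
  then have e2: "cx y = - cx p" "cy y = - cy p" by (auto simp: power2_eq_square add_nonneg_eq_0_iff)
  have "Lq x y = Lq p p" using z e1 e2 by (simp add: Lq_def)
  then show False using assms by simp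
qed

lemma T3:
  assumes "Lq p p = 1" "Lq x x = 1" "Lq y y = 1" "Lq p x = -1" "Lq p y = -1" "Lq x y = -1"
  shows "(sp x y - sp p x + sp p y)^2 = -4 * sp p x * sp p y"
proof -
  let ?F = "(sp x y - sp p x + sp p y)^2 + 4 * sp p x * sp p y"
  have h1: "of_real ((ca p)^2) * ?F = 0"
    by (rule pivot_alg[OF TP TN TN TR]) (use assms in \<open>simp_all add: Lq_sym\<close>)
  have "of_real ((ca x)^2) * ((sp p y - sp x p + sp x y)^2 + 4 * sp x p * sp x y) = 0"
    apply (rule pivot_alg[where Sa="sp x p" and Sb="sp x y" and Sc="sp p y" and p="ca x" and x="ca p" and y="ca y"])
    subgoal by (simp add: sp_def algebra_simps)
    subgoal by (subst TN) (use assms in \<open>simp_all add: Lq_sym add.commute\<close>)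
    subgoal by (subst TN) (use assms in \<open>simp_all add: Lq_sym add.commute\<close>)
    subgoal by (subst TR) (use assms in \<open>simp_all add: Lq_sym algebra_simps\<close>)
    done
  moreover have "(sp p y - sp x p + sp x y)^2 + 4 * sp x p * sp x y = ?F"
    by (simp add: sp_def algebra_simps power2_eq_square)
  ultimately have h2: "of_real ((ca x)^2) * ?F = 0" by simp
  have "of_real ((ca y)^2) * ((sp x p - sp y x + sp y p)^2 + 4 * sp y x * sp y p) = 0"
    apply (rule pivot_alg[where Sa="sp y x" and Sb="sp y p" and Sc="sp x p" and p="ca y" and x="ca x" and y="ca p"])
    subgoal by (simp add: sp_def algebra_simps)
    subgoal by (subst TN) (use assms in \<open>simp_all add: Lq_sym add.commute\<close>)
    subgoal by (subst TN) (use assms in \<open>simp_all add: Lq_sym add.commute\<close>)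
    subgoal by (subst TR) (use assms in \<open>simp_all add: Lq_sym algebra_simps\<close>)
    done
  moreover have "(sp x p - sp y x + sp y p)^2 + 4 * sp y x * sp y p = ?F"
    by (simp add: sp_def algebra_simps power2_eq_square)
  ultimately have h3: "of_real ((ca y)^2) * ?F = 0" by simp
  have "?F = 0" using h1 h2 h3 not_all_flat[OF assms] by auto
  then show ?thesis by (simp add: eq_neg_iff_add_eq_0 algebra_simps)
qed

definition desc4 :: "q4 \<Rightarrow> q4 \<Rightarrow> q4 \<Rightarrow> q4 \<Rightarrow> bool" where
  "desc4 P X Y Z \<longleftrightarrow> Lq P P = 1 \<and> Lq X X = 1 \<and> Lq Y Y = 1 \<and> Lq Z Z = 1 \<and>
     Lq P X = -1 \<and> Lq P Y = -1 \<and> Lq P Z = -1 \<and> Lq X Y = -1 \<and> Lq X Z = -1 \<and> Lq Y Z = -1"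

lemma plucker4: "sp P X * sp Y Z - sp P Y * sp X Z + sp P Z * sp X Y = 0"
  by (simp add: sp_def algebra_simps)

lemma deg_lem:
  assumes d: "desc4 P X Y Z" and s0: "sp P X = 0"
  shows "sp P Y = sp P Z"
proof -
  have n: "Lq P P = 1" "Lq X X = 1" "Lq Y Y = 1" "Lq Z Z = 1"
     "Lq P X = -1" "Lq P Y = -1" "Lq P Z = -1" "Lq X Y = -1" "Lq X Z = -1" "Lq Y Z = -1"
    using d by (auto simp: desc4_def)
  have "sp P X * cnj (sp P X) = of_real ((ca P + ca X)^2)" by (rule TN) (use n in auto)
  then have "of_real ((ca P + ca X)^2) = (0::complex)" using s0 by simp
  then have "(ca P + ca X)^2 = 0" by (simp only: of_real_eq_0_iff)
  then have aX: "ca X = - ca P" by simp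
  have a0: "ca P = 0"
  proof (rule ccontr)
    assume a: "ca P \<noteq> 0"
    have "Re (sp P X) = 0" "Im (sp P X) = 0" using s0 by auto
    then have "ca P * (cx X + cx P) = 0" "ca P * (cy X + cy P) = 0"
      using aX by (auto simp: sp_def vv_def algebra_simps)
    then have v: "cx X = - cx P" "cy X = - cy P" using a by auto
    have "ca P * (cc X + cc P) = Lq X X - Lq P P" using v aX by (simp add: Lq_def algebra_simps)
    then have "cc X = - cc P" using a n by simp
    then have "Lq X Y = - Lq P Y" using v aX by (simp add: Lq_def field_simps)
    then show False using n by simp
  qed
  have aX0: "ca X = 0" using aX a0 by simp
  have "(cx P + cx X)^2 + (cy P + cy X)^2 = Lq P P + Lq X X + 2 * Lq P X"
    using a0 aX0 by (simp add: Lq_def power2_eq_square algebra_simps)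
  then have "(cx P + cx X)^2 + (cy P + cy X)^2 = 0" using n by simp
  then have v: "cx X = - cx P" "cy X = - cy P" by (auto simp: power2_eq_square add_nonneg_eq_0_iff)
  have "ca Y * (cc P + cc X) = - 2 * (Lq P Y + Lq X Y)" using v a0 aX0 by (simp add: Lq_def algebra_simps)
  then have hY: "ca Y * (cc P + cc X) = 4" using n by simp
  have "ca Z * (cc P + cc X) = - 2 * (Lq P Z + Lq X Z)" using v a0 aX0 by (simp add: Lq_def algebra_simps)
  then have hZ: "ca Z * (cc P + cc X) = 4" using n by simp
  have "ca Y = ca Z"
  proof -
    have "cc P + cc X \<noteq> 0" using hY by auto
    then show ?thesis using hY hZ by (metis mult_right_cancel)
  qed
  then show ?thesis using a0 by (simp add: sp_def)
qed

lemma sq_sign: "(a::complex)^2 = b^2 \<Longrightarrow> \<exists>e. (e = 1 \<or> e = -1) \<and> a = e * b"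
  by (metis mult_1 mult_minus1 power2_eq_iff)

lemma T3_sign:
  assumes "Lq p p = 1" "Lq x x = 1" "Lq y y = 1" "Lq p x = -1" "Lq p y = -1" "Lq x y = -1"
    and "u^2 = sp p x" "v^2 = sp p y"
  shows "\<exists>e. (e = 1 \<or> e = -1) \<and> sp x y = u^2 - v^2 + e * (2 * \<i> * u * v)"
proof -
  have "(sp x y - u^2 + v^2)^2 = (2 * \<i> * u * v)^2"
    using T3[OF assms(1-6)] assms(7,8) by (simp add: power_mult_distrib)
  from sq_sign[OF this] obtain e where "(e = 1 \<or> e = -1)" "sp x y - u^2 + v^2 = e * (2 * \<i> * u * v)" by blast
  then show ?thesis by (intro exI[of _ e]) (auto simp: algebra_simps)
qed

lemma Q4:
  assumes d: "desc4 P X Y Z" and u: "u^2 = sp P X" and v: "v^2 = sp P Y" and w: "w^2 = sp P Z"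
  shows "\<exists>e. (e = 1 \<or> e = -1) \<and> sp P Z = (u + e * v)^2"
proof -
  have n: "Lq P P = 1" "Lq X X = 1" "Lq Y Y = 1" "Lq Z Z = 1"
     "Lq P X = -1" "Lq P Y = -1" "Lq P Z = -1" "Lq X Y = -1" "Lq X Z = -1" "Lq Y Z = -1"
    using d by (auto simp: desc4_def)
  show ?thesis
  proof (cases "u = 0 \<or> v = 0 \<or> w = 0")
    case True
    then show ?thesis
    proof (elim disjE)
      assume "u = 0"
      then have "sp P X = 0" using u by simp
      then have "sp P Y = sp P Z" by (rule deg_lem[OF d])
      then show ?thesis using \<open>u = 0\<close> v by (intro exI[of _ 1]) auto
    next
      assume "v = 0"
      then have "sp P Y = 0" using v by simp
      moreover have "desc4 P Y X Z" using d by (auto simp: desc4_def Lq_sym)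
      ultimately have "sp P X = sp P Z" using deg_lem by blast
      then show ?thesis using \<open>v = 0\<close> u by (intro exI[of _ 1]) auto
    next
      assume "w = 0"
      then have "sp P Z = 0" using w by simp
      moreover have "desc4 P Z X Y" using d by (auto simp: desc4_def Lq_sym)
      ultimately have "sp P X = sp P Y" using deg_lem by blast
      then have "u^2 = v^2" using u v by simp
      then obtain e where e: "e = 1 \<or> e = -1" "u = e * v" using sq_sign by blast
      then show ?thesis using \<open>sp P Z = 0\<close>
        by (intro exI[of _ "-e"]) (auto simp: algebra_simps)
    qed
  next
    case False
    obtain e1 where e1: "e1 = 1 \<or> e1 = -1" "sp X Y = u^2 - v^2 + e1 * (2 * \<i> * u * v)"
      using T3_sign[OF n(1,2,3,5,6,8) u v] by blast
    obtain e2 where e2: "e2 = 1 \<or> e2 = -1" "sp X Z = u^2 - w^2 + e2 * (2 * \<i> * u * w)"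
      using T3_sign[OF n(1,2,4,5,7,9) u w] by blast
    obtain e3 where e3: "e3 = 1 \<or> e3 = -1" "sp Y Z = v^2 - w^2 + e3 * (2 * \<i> * v * w)"
      using T3_sign[OF n(1,3,4,6,7,10) v w] by blast
    have "0 = sp P X * sp Y Z - sp P Y * sp X Z + sp P Z * sp X Y" using plucker4 by simp
    also have "\<dots> = u^2 * (v^2 - w^2 + e3 * (2 * \<i> * v * w)) - v^2 * (u^2 - w^2 + e2 * (2 * \<i> * u * w))
        + w^2 * (u^2 - v^2 + e1 * (2 * \<i> * u * v))"
      using u v w e1 e2 e3 by simp
    also have "\<dots> = (2 * \<i> * u * v * w) * (e3 * u - e2 * v + e1 * w)"
      by (simp add: algebra_simps power2_eq_square)
    finally have "e3 * u - e2 * v + e1 * w = 0" using False by simp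
    then have "e1 * w = e2 * v - e3 * u" by (simp add: algebra_simps)
    then have "(e1 * w)^2 = (e2 * v - e3 * u)^2" by simp
    moreover have "(e1 * w)^2 = w^2" using e1(1) by (auto simp: power2_eq_square)
    moreover have "(e2 * v - e3 * u)^2 = (u + (- e2 * e3) * v)^2"
      using e2(1) e3(1) by (auto simp: power2_eq_square algebra_simps)
    ultimately have "sp P Z = (u + (- e2 * e3) * v)^2" using w by simp
    moreover have "- e2 * e3 = 1 \<or> - e2 * e3 = -1" using e2(1) e3(1) by auto
    ultimately show ?thesis by blast
  qed
qed



lemma sym_disk: "symbol (Disk c r) = (Re c / r, Im c / r, 1 / r, ((Re c / r)^2 + (Im c / r)^2 - 1) * r)"
  by (simp add: Let_def)
lemma sym_codisk: "symbol (CoDisk c r) = (- Re c / r, - Im c / r, - 1 / r, - (((Re c / r)^2 + (Im c / r)^2 - 1) * r))"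
  by (simp add: Let_def power2_eq_square field_simps)
lemma sym_half: "symbol (HalfPlane n h) = (Re n, Im n, 0, 2 * h)" by simp

lemma curv_sym: "curv A = ca (symbol A)" by (cases A) (simp_all add: Let_def)
lemma spin_sq_sp: "spin_sq A B = sp (symbol A) (symbol B)"
  by (simp add: spin_sq_def sp_def vv_def curv_sym xdot_def ydot_def cx_def cy_def complex_eq_iff)

lemma integral_symbol_iff: "integral_symbol X \<longleftrightarrow> cx (symbol X) \<in> \<int> \<and> cy (symbol X) \<in> \<int> \<and> ca (symbol X) \<in> \<int> \<and> cc (symbol X) \<in> \<int>"
  by (simp add: integral_symbol_def cx_def cy_def ca_def cc_def split: prod.split)

lemma valid_norm: assumes "valid_gdisk X" shows "Lq (symbol X) (symbol X) = 1"
proof (cases X)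
  case (Disk c r)
  then show ?thesis using assms by (auto simp: Lq_def Let_def power2_eq_square field_simps)
next
  case (CoDisk c r)
  then show ?thesis using assms by (auto simp: Lq_def Let_def power2_eq_square field_simps)
next
  case (HalfPlane n h)
  have "(Re n)^2 + (Im n)^2 = 1" using HalfPlane assms by (simp add: cmod_power2[symmetric])
  then show ?thesis using HalfPlane by (simp add: Lq_def power2_eq_square)
qed

definition Fq :: "q4 \<Rightarrow> complex \<Rightarrow> real" where
  "Fq t p = ca t * ((Re p)^2 + (Im p)^2) - 2 * (cx t * Re p + cy t * Im p) + cc t"

lemma dist_sq: "(dist c p)^2 = (Re p - Re c)^2 + (Im p - Im c)^2"
  by (simp add: dist_norm cmod_power2 power2_commute)

lemma gset_Fq: assumes "valid_gdisk X" shows "gset X = {p. Fq (symbol X) p \<le> 0}"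
proof (cases X)
  case (Disk c r)
  then have r: "r > 0" using assms by simp
  have "Fq (symbol X) p = ((dist c p)^2 - r^2) / r" for p
    using r Disk unfolding dist_sq by (simp add: Fq_def Let_def power2_eq_square field_simps)
  moreover have "dist c p \<le> r \<longleftrightarrow> (dist c p)^2 - r^2 \<le> 0" for p
    using r by (smt (verit) power_mono zero_le_dist power2_le_imp_le)
  ultimately show ?thesis using Disk r by (auto simp: divide_le_0_iff)
next
  case (CoDisk c r)
  then have r: "r > 0" using assms by simp
  have "Fq (symbol X) p = - ((dist c p)^2 - r^2) / r" for p
    using r CoDisk unfolding dist_sq by (simp add: Fq_def Let_def power2_eq_square field_simps)
  moreover have "dist c p \<ge> r \<longleftrightarrow> (dist c p)^2 - r^2 \<ge> 0" for p
    using r by (smt (verit) power_mono zero_le_dist power2_le_imp_le)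
  moreover have "closure (- ball c r) = - ball c r" by (simp add: closed_Compl)
  ultimately show ?thesis using CoDisk r by (auto simp: divide_le_0_iff)
next
  case (HalfPlane n h)
  then show ?thesis by (auto simp: Fq_def inner_complex_def algebra_simps)
qed



definition mk :: "q4 \<Rightarrow> gdisk" where
  "mk t = (if ca t > 0 then Disk (vv t / of_real (ca t)) (1 / ca t)
           else if ca t < 0 then CoDisk (vv t / of_real (ca t)) (- 1 / ca t)
           else HalfPlane (vv t) (cc t / 2))"

lemma mk_ok: assumes "Lq t t = 1" shows "valid_gdisk (mk t) \<and> symbol (mk t) = t"
proof -
  have N: "(cx t)^2 + (cy t)^2 - ca t * cc t = 1" using assms by (simp add: Lq_def power2_eq_square)
  show ?thesis
  proof (cases "ca t > 0")
    case True
    have "cc t = ((cx t)^2 + (cy t)^2 - 1) / ca t" using N True by (simp add: field_simps)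
    then show ?thesis using True
      apply (simp add: mk_def q4_eq vv_def Let_def Re_divide Im_divide power2_eq_square field_simps)
      using N by algebra
  next
    case False
    show ?thesis
    proof (cases "ca t < 0")
      case True
      have "cc t = ((cx t)^2 + (cy t)^2 - 1) / ca t" using N True by (simp add: field_simps)
      then show ?thesis using True
        apply (simp add: mk_def q4_eq vv_def Let_def Re_divide Im_divide power2_eq_square field_simps)
        using N by algebra
    next
      case False2: False
      then have z: "ca t = 0" using False by simp
      then have "(cx t)^2 + (cy t)^2 = 1" using N by simp
      then have "norm (vv t) = 1" by (simp add: vv_def cmod_def)
      then show ?thesis using z by (simp add: mk_def q4_eq vv_def)
    qed
  qed
qed

lemma mk_symbol: assumes "valid_gdisk X" shows "mk (symbol X) = X"
proof (cases X)
  case (Disk c r)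
  then show ?thesis using assms by (simp add: mk_def Let_def vv_def complex_eq_iff Re_divide Im_divide field_simps)
next
  case (CoDisk c r)
  then show ?thesis using assms by (simp add: mk_def Let_def vv_def complex_eq_iff Re_divide Im_divide field_simps)
next
  case (HalfPlane n h)
  then show ?thesis by (simp add: mk_def vv_def complex_eq_iff)
qed

lemma symbol_inj: "valid_gdisk X \<Longrightarrow> valid_gdisk Y \<Longrightarrow> symbol X = symbol Y \<Longrightarrow> X = Y"
  by (metis mk_symbol)

lemma unbounded_I: assumes "\<And>B. \<exists>p\<in>S. norm p > B" shows "\<not> bounded (S::complex set)"
  using assms unfolding bounded_iff by (meson not_le)

lemma unb_coball: "\<not> bounded (- ball (c::complex) r)"
proof (rule unbounded_I)
  fix B
  define t where "t = \<bar>r\<bar> + \<bar>B\<bar> + norm c + 1"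
  have t1: "t > B + norm c" "t \<ge> r" "t > 0" unfolding t_def using norm_ge_zero[of c] by linarith+
  let ?p = "c + of_real t"
  have "norm (complex_of_real t) = t" using t1 by simp
  then have "norm ?p \<ge> t - norm c" using norm_triangle_ineq2[of "of_real t" "- c"]
    by (smt (verit) add.commute norm_minus_cancel norm_triangle_ineq4 diff_minus_eq_add)
  then have "norm ?p > B" using t1 by linarith
  moreover have "dist c ?p = t" using t1 by (simp add: dist_norm)
  ultimately show "\<exists>p\<in>- ball c r. norm p > B" using t1 by (intro bexI[of _ ?p]) auto
qed

lemma unb_half: assumes "norm n = 1" shows "\<not> bounded {p::complex. inner p n \<ge> h}"
proof (rule unbounded_I)
  fix B
  define t where "t = \<bar>h\<bar> + \<bar>B\<bar> + 1"
  have t1: "t > B" "t \<ge> h" "t > 0" unfolding t_def by linarith+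
  have n2: "Re n * Re n + Im n * Im n = 1" using assms by (simp add: cmod_def power2_eq_square)
  have "inner (of_real t * n) n = t * (Re n * Re n + Im n * Im n)"
    by (simp add: inner_complex_def algebra_simps)
  then have "inner (of_real t * n) n = t" using n2 by simp
  moreover have "norm (of_real t * n) = t" using assms t1 by (simp add: norm_mult)
  ultimately show "\<exists>p\<in>{p. inner p n \<ge> h}. norm p > B" using t1 by (intro bexI[of _ "of_real t * n"]) auto
qed

lemma unb_half_lt: assumes "norm n = 1" shows "\<not> bounded {p::complex. inner p n < h}"
proof (rule unbounded_I)
  fix B
  define t where "t = \<bar>h\<bar> + \<bar>B\<bar> + 1"
  have t1: "t > B" "- t < h" "t > 0" unfolding t_def by linarith+
  have n2: "Re n * Re n + Im n * Im n = 1" using assms by (simp add: cmod_def power2_eq_square)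
  have "inner (- of_real t * n) n = - t * (Re n * Re n + Im n * Im n)"
    by (simp add: inner_complex_def algebra_simps)
  then have "inner (- of_real t * n) n = - t" using n2 by simp
  moreover have "norm (- of_real t * n) = t" using assms t1 by (simp add: norm_mult)
  ultimately show "\<exists>p\<in>{p. inner p n < h}. norm p > B" using t1 by (intro bexI[of _ "- of_real t * n"]) auto
qed

lemma half_eq:
  assumes n: "norm n = 1" and m: "norm m = 1" and e: "{p::complex. inner p n \<ge> h} = {p. inner p m \<ge> k}"
  shows "n = m \<and> h = k"
proof -
  have n2: "(Re n)^2 + (Im n)^2 = 1" using n by (simp add: cmod_def)
  have m2: "(Re m)^2 + (Im m)^2 = 1" using m by (simp add: cmod_def)
  have fr: "{p::complex. inner p n = h} = {p. inner p m = k}"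
  proof -
    have "frontier {p::complex. inner p n \<ge> h} = frontier {p. n \<bullet> p \<ge> h}" by (simp add: inner_commute)
    also have "\<dots> = {p. n \<bullet> p = h}" by (rule frontier_halfspace_ge) (use n in auto)
    also have "\<dots> = {p. inner p n = h}" by (simp add: inner_commute)
    finally have f1: "frontier {p::complex. inner p n \<ge> h} = {p. inner p n = h}" .
    have "frontier {p::complex. inner p m \<ge> k} = frontier {p. m \<bullet> p \<ge> k}" by (simp add: inner_commute)
    also have "\<dots> = {p. m \<bullet> p = k}" by (rule frontier_halfspace_ge) (use m in auto)
    also have "\<dots> = {p. inner p m = k}" by (simp add: inner_commute)
    finally have f2: "frontier {p::complex. inner p m \<ge> k} = {p. inner p m = k}" .
    show ?thesis using e f1 f2 by simp
  qed
  have n2': "Re n * Re n + Im n * Im n = 1" using n2 by (simp add: power2_eq_square)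
  have "inner (of_real h * n) n = h * (Re n * Re n + Im n * Im n)" by (simp add: inner_complex_def algebra_simps)
  then have i1: "inner (of_real h * n) n = h" using n2' by simp
  have hn: "h * (Re n * Re n) + h * (Im n * Im n) = h" using n2' by (metis distrib_left mult.right_neutral)
  have "inner (of_real h * n + \<i> * n) n = h * (Re n * Re n + Im n * Im n)" by (simp add: inner_complex_def algebra_simps)
  then have i2: "inner (of_real h * n + \<i> * n) n = h" using n2' by simp
  have a1: "inner (of_real h * n) m = k" using i1 fr by blast
  have a2: "inner (of_real h * n + \<i> * n) m = k" using i2 fr by blast
  have perp: "- Im n * Re m + Re n * Im m = 0" using a1 a2 by (simp add: inner_complex_def algebra_simps)
  define l where "l = Re n * Re m + Im n * Im m"
  have m1: "Re m = l * Re n" "Im m = l * Im n"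
    using perp n2 unfolding l_def by (simp_all add: power2_eq_square) (algebra+)
  have "l^2 = 1" using m2 n2 m1 by (simp add: power_mult_distrib algebra_simps) (metis distrib_left mult.right_neutral)
  then have "l = 1 \<or> l = -1" by (simp add: power2_eq_1_iff)
  moreover have "l \<noteq> -1"
  proof
    assume "l = -1"
    have "inner (of_real (h+1) * n) n = (h+1) * (Re n * Re n + Im n * Im n)" by (simp add: inner_complex_def algebra_simps)
    then have "inner (of_real (h+1) * n) n \<ge> h" using n2' by simp
    then have "inner (of_real (h+1) * n) m \<ge> k" using e by blast
    moreover have "k = - h" using a1 m1 \<open>l = -1\<close> hn by (simp add: inner_complex_def algebra_simps; linarith)
    ultimately show False using m1 \<open>l = -1\<close> hn n2' by (simp add: inner_complex_def algebra_simps; smt (verit) distrib_left)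
  qed
  ultimately have "l = 1" by simp
  then have "m = n" using m1 by (simp add: complex_eq_iff)
  moreover have "k = h" using a1 m1 \<open>l = 1\<close> hn by (simp add: inner_complex_def algebra_simps; linarith)
  ultimately show ?thesis by simp
qed

lemma gset_inj: assumes "valid_gdisk X" "valid_gdisk Y" "gset X = gset Y" shows "X = Y"
proof -
  have bX: "bounded (gset X) \<longleftrightarrow> (\<exists>c r. X = Disk c r)" using assms(1)
    by (cases X) (auto simp: unb_coball closed_Compl unb_half)
  have bY: "bounded (gset Y) \<longleftrightarrow> (\<exists>c r. Y = Disk c r)" using assms(2)
    by (cases Y) (auto simp: unb_coball closed_Compl unb_half)
  show ?thesis
  proof (cases X)
    case (Disk c r)
    have "bounded (gset Y)" using Disk assms(3)[symmetric] by simp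
    then obtain c' r' where Y: "Y = Disk c' r'" using bY by auto
    then show ?thesis using Disk assms by (auto simp: cball_eq_cball_iff)
  next
    case (CoDisk c r)
    then have "\<not> bounded (gset Y)" using bX assms(3) by auto
    then show ?thesis
    proof (cases Y)
      case (CoDisk c' r')
      then have "ball c r = ball c' r'" using \<open>X = CoDisk c r\<close> assms(3) by (simp add: closed_Compl)
      then show ?thesis using CoDisk \<open>X = CoDisk c r\<close> assms by (auto simp: ball_eq_ball_iff)
    next
      case (HalfPlane n h)
      then have "ball c r = - {p. inner p n \<ge> h}" using \<open>X = CoDisk c r\<close> assms(3) by (simp add: closed_Compl) (metis double_complement)
      also have "\<dots> = {p. inner p n < h}" by auto
      finally have "bounded {p. inner p n < h}" by (metis bounded_ball)
      then show ?thesis using unb_half_lt assms(2) HalfPlane by auto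
    qed (use bY in auto)
  next
    case (HalfPlane n h)
    then have "\<not> bounded (gset Y)" using bX assms(3) by auto
    then show ?thesis
    proof (cases Y)
      case (CoDisk c' r')
      then have "ball c' r' = - {p. inner p n \<ge> h}" using HalfPlane assms(3) by (simp add: closed_Compl)
      also have "\<dots> = {p. inner p n < h}" by auto
      finally have "bounded {p. inner p n < h}" by (metis bounded_ball)
      then show ?thesis using unb_half_lt assms(1) HalfPlane by auto
    next
      case (HalfPlane n' h')
      then show ?thesis using half_eq[of n n' h h'] \<open>X = HalfPlane n h\<close> assms by auto
    qed (use bY in auto)
  qed
qed



lemma interior_gset:
  "valid_gdisk (Disk c r) \<Longrightarrow> interior (gset (Disk c r)) = ball c r"
  "valid_gdisk (CoDisk c r) \<Longrightarrow> interior (gset (CoDisk c r)) = - cball c r"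
  "valid_gdisk (HalfPlane n h) \<Longrightarrow> interior (gset (HalfPlane n h)) = {p. inner p n > h}"
proof -
  show "valid_gdisk (Disk c r) \<Longrightarrow> interior (gset (Disk c r)) = ball c r" by simp
  show "valid_gdisk (CoDisk c r) \<Longrightarrow> interior (gset (CoDisk c r)) = - cball c r"
    by (simp add: closed_Compl interior_complement)
  assume "valid_gdisk (HalfPlane n h)"
  then have "n \<noteq> 0" by auto
  have "interior {p::complex. inner p n \<ge> h} = interior {p. n \<bullet> p \<ge> h}" by (simp add: inner_commute)
  also have "\<dots> = {p. n \<bullet> p > h}" using \<open>n \<noteq> 0\<close> by simp
  also have "\<dots> = {p. inner p n > h}" by (simp add: inner_commute)
  finally show "interior (gset (HalfPlane n h)) = {p. inner p n > h}" by simp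
qed

lemma frontier_gset:
  "valid_gdisk (Disk c r) \<Longrightarrow> frontier (gset (Disk c r)) = sphere c r"
  "valid_gdisk (CoDisk c r) \<Longrightarrow> frontier (gset (CoDisk c r)) = sphere c r"
  "valid_gdisk (HalfPlane n h) \<Longrightarrow> frontier (gset (HalfPlane n h)) = {p. inner p n = h}"
proof -
  show "valid_gdisk (Disk c r) \<Longrightarrow> frontier (gset (Disk c r)) = sphere c r" by simp
  show "valid_gdisk (CoDisk c r) \<Longrightarrow> frontier (gset (CoDisk c r)) = sphere c r"
    by (simp add: closed_Compl)
  assume "valid_gdisk (HalfPlane n h)"
  then have "n \<noteq> 0" by auto
  have "frontier {p::complex. inner p n \<ge> h} = frontier {p. n \<bullet> p \<ge> h}" by (simp add: inner_commute)
  also have "\<dots> = {p. n \<bullet> p = h}" using \<open>n \<noteq> 0\<close> by (simp add: frontier_halfspace_ge)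
  also have "\<dots> = {p. inner p n = h}" by (simp add: inner_commute)
  finally show "frontier (gset (HalfPlane n h)) = {p. inner p n = h}" by simp
qed

lemma tangent_sym: "tangent A B \<Longrightarrow> tangent B A"
  unfolding tangent_def by (auto simp: Int_commute)

lemma tangent_parts:
  assumes "tangent A B"
  shows "interior (gset A) \<inter> interior (gset B) = {}"
    "\<not> (is_halfplane A \<and> is_halfplane B) \<Longrightarrow> \<exists>p. p \<in> frontier (gset A) \<and> p \<in> frontier (gset B)"
  using assms unfolding tangent_def by auto

lemma Lq_disks: "Lq (symbol (Disk c r)) (symbol (Disk c' r')) = ((Re c * Re c' + Im c * Im c') * 2 - (Re c)^2 - (Im c)^2 - (Re c')^2 - (Im c')^2 + r^2 + r'^2) / (2 * r * r')"
  if "r > 0" "r' > 0"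
  using that by (simp add: Lq_def Let_def power2_eq_square field_simps)

lemma ball_disj: assumes "ball (c::complex) r \<inter> ball c' r' = {}" "r > 0" "r' > 0"
  shows "dist c c' \<ge> r + r'"
proof (rule ccontr)
  assume "\<not> dist c c' \<ge> r + r'"
  then have d: "dist c c' < r + r'" by simp
  define k where "k = r / (r + r')"
  have k: "0 \<le> k" "k * dist c c' < r" "(1 - k) * dist c c' < r'"
  proof -
    have "r * dist c c' < r * (r + r')" "r' * dist c c' < r' * (r + r')" using d assms by simp_all
    then show "0 \<le> k" "k * dist c c' < r" "(1 - k) * dist c c' < r'"
      using assms by (auto simp: k_def field_simps)
  qed
  let ?q = "c + k *\<^sub>R (c' - c)"
  have "dist c ?q = k * dist c c'" using k by (simp add: dist_norm norm_minus_commute)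
  then have 1: "?q \<in> ball c r" using k by simp
  have "c' - ?q = (1 - k) *\<^sub>R (c' - c)" by (simp add: algebra_simps)
  moreover have "1 - k \<ge> 0" using assms by (simp add: k_def field_simps)
  ultimately have "dist c' ?q = (1 - k) * dist c c'" by (simp add: dist_norm norm_minus_commute)
  then have 2: "?q \<in> ball c' r'" using k by simp
  show False using 1 2 assms by auto
qed

lemma Lq_DC: "r > 0 \<Longrightarrow> r' > 0 \<Longrightarrow> Lq (symbol (Disk c r)) (symbol (CoDisk c' r')) = ((dist c c')^2 - r^2 - r'^2) / (2 * r * r')"
  unfolding dist_sq by (simp add: Lq_def Let_def power2_eq_square field_simps)

lemma Lq_DD': "r > 0 \<Longrightarrow> r' > 0 \<Longrightarrow> Lq (symbol (Disk c r)) (symbol (Disk c' r')) = (r^2 + r'^2 - (dist c c')^2) / (2 * r * r')"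
  unfolding dist_sq by (simp add: Lq_def Let_def power2_eq_square field_simps)

lemma Lq_DH: "r > 0 \<Longrightarrow> Lq (symbol (Disk c r)) (symbol (HalfPlane n h)) = (inner c n - h) / r"
  by (simp add: Lq_def Let_def inner_complex_def field_simps)

lemma Lq_HH: "Lq (symbol (HalfPlane n h)) (symbol (HalfPlane m k)) = inner n m"
  by (simp add: Lq_def inner_complex_def)

lemma tan_DD:
  assumes "r > 0" "r' > 0" "ball c r \<inter> ball c' r' = {}" "p \<in> sphere c r" "p \<in> sphere c' r'"
  shows "Lq (symbol (Disk c r)) (symbol (Disk c' r')) = -1"
proof -
  have "dist c c' \<ge> r + r'" using ball_disj assms by blast
  moreover have "dist c c' \<le> r + r'" using assms dist_triangle[of c c' p] by (simp add: dist_commute)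
  ultimately have "dist c c' = r + r'" by simp
  note dd = this
  have "Lq (symbol (Disk c r)) (symbol (Disk c' r')) = (r^2 + r'^2 - (dist c c')^2) / (2 * r * r')"
    using assms by (intro Lq_DD')
  also have "\<dots> = -1" using assms unfolding dd by (simp add: power2_eq_square field_simps)
  finally show ?thesis .
qed

lemma tan_DC:
  assumes "r > 0" "r' > 0" "ball c r \<inter> - cball c' r' = {}" "p \<in> sphere c r" "p \<in> sphere c' r'"
  shows "Lq (symbol (Disk c r)) (symbol (CoDisk c' r')) = -1"
proof -
  have "ball c r \<subseteq> cball c' r'" using assms(3) by auto
  then have "dist c c' + r \<le> r'" using assms(1) by (simp add: ball_subset_cball_iff)
  moreover have "r' \<le> dist c c' + r" using assms dist_triangle[of c' p c] by (simp add: dist_commute)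
  ultimately have "dist c c' = r' - r" by simp
  note dd = this
  have "Lq (symbol (Disk c r)) (symbol (CoDisk c' r')) = ((dist c c')^2 - r^2 - r'^2) / (2 * r * r')"
    using assms by (intro Lq_DC)
  also have "\<dots> = -1" using assms unfolding dd by (simp add: power2_eq_square field_simps)
  finally show ?thesis .
qed

lemma inner_nn: "norm (n::complex) = 1 \<Longrightarrow> inner n n = 1"
  by (metis power2_norm_eq_inner power_one)

lemma tan_DH:
  assumes "r > 0" "norm n = 1" "ball c r \<inter> {p. inner p n > h} = {}" "p \<in> sphere c r" "inner p n = h"
  shows "Lq (symbol (Disk c r)) (symbol (HalfPlane n h)) = -1"
proof -
  have le: "inner c n + r \<le> h"
  proof (rule ccontr)
    assume "\<not> ?thesis"
    then have g: "inner c n + r > h" by simp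
    define M where "M = max 0 (h - inner c n)"
    define s where "s = (r + M) / 2"
    have m: "M < r" "h - inner c n \<le> M" "0 \<le> M"
      using g assms(1) unfolding M_def by auto
    have s1: "0 \<le> s" using m assms(1) unfolding s_def by (simp add: field_simps)
    have s2: "s < r" using m assms(1) unfolding s_def by (simp add: field_simps)
    have s3: "inner c n + s > h" using m assms(1) unfolding s_def by (simp add: field_simps)
    note s = s1 s2 s3
    have "dist c (c + s *\<^sub>R n) = s" using s assms(2) by (simp add: dist_norm)
    moreover have "inner (c + s *\<^sub>R n) n = inner c n + s" using inner_nn[OF assms(2)] by (simp add: inner_add_left)
    ultimately have "c + s *\<^sub>R n \<in> ball c r \<inter> {p. inner p n > h}" using s by simp
    then show False using assms(3) by blast
  qed
  have "h = inner c n + inner (p - c) n" using assms(5) by (simp add: inner_diff_left)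
  also have "\<dots> \<le> inner c n + norm (p - c) * norm n" using norm_cauchy_schwarz[of "p - c" n] by simp
  also have "\<dots> = inner c n + r" using assms(2,4) by (simp add: dist_norm norm_minus_commute)
  finally have hh: "h = inner c n + r" using le by simp
  have "Lq (symbol (Disk c r)) (symbol (HalfPlane n h)) = (inner c n - h) / r" using assms(1) by (rule Lq_DH)
  also have "\<dots> = -1" using hh assms(1) by simp
  finally show ?thesis .
qed

lemma tan_CC: fixes c c' :: complex assumes "r > 0" "r' > 0" shows "- cball c r \<inter> - cball c' r' \<noteq> {}"
proof -
  define t where "t = r + r' + dist c c' + 1"
  have t: "t > r" "t - dist c c' > r'" "t > 0" unfolding t_def using assms zero_le_dist[of c c'] by linarith+
  have "norm (complex_of_real t) = t" using t by simp
  then have d1: "dist c (c + of_real t) = t" by (simp add: dist_norm)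
  moreover have "dist c' (c + of_real t) \<ge> dist c (c + of_real t) - dist c c'"
    using dist_triangle[of c "c + of_real t" c'] by (simp add: dist_commute)
  ultimately have "c + of_real t \<in> - cball c r \<inter> - cball c' r'" using t by auto
  then show ?thesis by blast
qed

lemma tan_CH: fixes c n :: complex assumes "r > 0" "norm n = 1" shows "- cball c r \<inter> {p. inner p n > h} \<noteq> {}"
proof -
  define t where "t = \<bar>h\<bar> + r + norm c + 1"
  have t: "t > 0" "t > h" "t - norm c > r" unfolding t_def using assms norm_ge_zero[of c] by linarith+
  have "inner (t *\<^sub>R n) n = t" using inner_nn[OF assms(2)] by simp
  moreover have "dist c (t *\<^sub>R n) \<ge> norm (t *\<^sub>R n) - norm c"
    by (metis dist_norm norm_minus_commute norm_triangle_ineq2)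
  moreover have "norm (t *\<^sub>R n) = t" using t assms by simp
  ultimately have "t *\<^sub>R n \<in> - cball c r \<inter> {p. inner p n > h}" using t by auto
  then show ?thesis by blast
qed

lemma tan_HH:
  assumes "norm n = 1" "norm m = 1" "{p::complex. inner p n > h} \<inter> {p. inner p m > k} = {}"
  shows "inner n m = -1"
proof (rule ccontr)
  assume ne: "inner n m \<noteq> -1"
  have "inner n m \<ge> - (norm n * norm m)" using norm_cauchy_schwarz[of "-n" m] by simp
  then have g: "1 + inner n m > 0" using ne assms by simp
  define t where "t = (\<bar>h\<bar> + \<bar>k\<bar> + 1) / (1 + inner n m)"
  have t: "t * (1 + inner n m) = \<bar>h\<bar> + \<bar>k\<bar> + 1" using g by (simp add: t_def)
  have "inner (t *\<^sub>R (n + m)) n = t * (1 + inner n m)"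
    using inner_nn[OF assms(1)] by (simp add: inner_add_left inner_commute[of m n])
  moreover have "inner (t *\<^sub>R (n + m)) m = t * (1 + inner n m)"
    using inner_nn[OF assms(2)] by (simp add: inner_add_left inner_commute algebra_simps)
  ultimately have "t *\<^sub>R (n + m) \<in> {p. inner p n > h} \<inter> {p. inner p m > k}" using t by auto
  then show False using assms(3) by blast
qed

lemma tangent_Lq:
  assumes vA: "valid_gdisk A" and vB: "valid_gdisk B" and t: "tangent A B"
  shows "Lq (symbol A) (symbol B) = -1"
proof -
  have main: "Lq (symbol X) (symbol Y) = -1" if vX: "valid_gdisk X" and vY: "valid_gdisk Y" and tXY: "tangent X Y"
    and ord: "\<not> (\<exists>c r. Y = Disk c r) \<or> (\<exists>c r. X = Disk c r)"
    and ord2: "(\<exists>n h. X = HalfPlane n h) \<longrightarrow> (\<exists>n h. Y = HalfPlane n h)" for X Y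
  proof -
    note I = tangent_parts(1)[OF tXY]
    note F = tangent_parts(2)[OF tXY]
    show ?thesis
    proof (cases X)
      case (Disk c r)
      have FX: "frontier (gset X) = sphere c r" using Disk vX frontier_gset(1)[of c r] by simp
      have IX: "interior (gset X) = ball c r" using Disk vX interior_gset(1)[of c r] by simp
      have r: "r > 0" using Disk vX by simp
      show ?thesis
      proof (cases Y)
        case (Disk c' r')
        have FY: "frontier (gset Y) = sphere c' r'" using Disk vY frontier_gset(1)[of c' r'] by simp
        have IY: "interior (gset Y) = ball c' r'" using Disk vY interior_gset(1)[of c' r'] by simp
        obtain p where "p \<in> sphere c r" "p \<in> sphere c' r'"
          using F \<open>X = Disk c r\<close> Disk FX FY unfolding is_halfplane_def by auto
        then show ?thesis using tan_DD[of r r' c c' p] I[unfolded IX IY] \<open>X = Disk c r\<close> Disk r vY by simp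
      next
        case (CoDisk c' r')
        have FY: "frontier (gset Y) = sphere c' r'" using CoDisk vY frontier_gset(2)[of c' r'] by simp
        have IY: "interior (gset Y) = - cball c' r'" using CoDisk vY interior_gset(2)[of c' r'] by simp
        obtain p where "p \<in> sphere c r" "p \<in> sphere c' r'"
          using F \<open>X = Disk c r\<close> CoDisk FX FY unfolding is_halfplane_def by auto
        then show ?thesis using tan_DC[of r r' c c' p] I[unfolded IX IY] \<open>X = Disk c r\<close> CoDisk r vY by simp
      next
        case (HalfPlane n h)
        have FY: "frontier (gset Y) = {p. inner p n = h}" using HalfPlane vY frontier_gset(3)[of n h] by simp
        have IY: "interior (gset Y) = {p. inner p n > h}" using HalfPlane vY interior_gset(3)[of n h] by simp
        obtain p where "p \<in> sphere c r" "inner p n = h"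
          using F \<open>X = Disk c r\<close> HalfPlane FX FY unfolding is_halfplane_def by auto
        then show ?thesis using tan_DH[of r n c h p] I[unfolded IX IY] \<open>X = Disk c r\<close> HalfPlane r vY by simp
      qed
    next
      case (CoDisk c r)
      have IX: "interior (gset X) = - cball c r" using CoDisk vX interior_gset(2)[of c r] by simp
      have r: "r > 0" using CoDisk vX by simp
      show ?thesis
      proof (cases Y)
        case (Disk c' r')
        then show ?thesis using ord CoDisk by auto
      next
        case (CoDisk c' r')
        have IY: "interior (gset Y) = - cball c' r'" using CoDisk vY interior_gset(2)[of c' r'] by simp
        show ?thesis using tan_CC[of r r' c c'] I[unfolded IX IY] CoDisk r vY by simp
      next
        case (HalfPlane n h)
        have IY: "interior (gset Y) = {p. inner p n > h}" using HalfPlane vY interior_gset(3)[of n h] by simp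
        show ?thesis using tan_CH[of r n c h] I[unfolded IX IY] HalfPlane r vY by simp
      qed
    next
      case (HalfPlane n h)
      then obtain m k where Y: "Y = HalfPlane m k" using ord2 by auto
      have IX: "interior (gset X) = {p. inner p n > h}" using HalfPlane vX interior_gset(3)[of n h] by simp
      have IY: "interior (gset Y) = {p. inner p m > k}" using Y vY interior_gset(3)[of m k] by simp
      have "inner n m = -1" using tan_HH[of n m h k] I[unfolded IX IY] HalfPlane Y vX vY by simp
      then show ?thesis using HalfPlane Y Lq_HH[of n h m k] by simp
    qed
  qed
  show ?thesis
  proof (cases "(\<not> (\<exists>c r. B = Disk c r) \<or> (\<exists>c r. A = Disk c r)) \<and> ((\<exists>n h. A = HalfPlane n h) \<longrightarrow> (\<exists>n h. B = HalfPlane n h))")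
    case True
    then show ?thesis using main[OF vA vB t] by blast
  next
    case False
    have "Lq (symbol B) (symbol A) = -1"
    proof (rule main[OF vB vA tangent_sym[OF t]])
      show "\<not> (\<exists>c r. A = Disk c r) \<or> (\<exists>c r. B = Disk c r)" using False by (cases A; cases B) auto
      show "(\<exists>n h. B = HalfPlane n h) \<longrightarrow> (\<exists>n h. A = HalfPlane n h)" using False by (cases A; cases B) auto
    qed
    then show ?thesis by (simp add: Lq_sym)
  qed
qed



lemma lin4: "Lq (al *\<^sub>R a + be *\<^sub>R b + ga *\<^sub>R c + de *\<^sub>R d) x = al * Lq a x + be * Lq b x + ga * Lq c x + de * Lq d x"
  by (simp add: Lq_def algebra_simps add_divide_distrib diff_divide_distrib)

lemma conj_unique:
  assumes d: "desc4 a b c d" and e: "Lq e e = 1" "Lq a e = -1" "Lq b e = -1" "Lq c e = -1"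
  shows "e = d \<or> e = 2 *\<^sub>R (a + b + c) - d"
proof -
  have n: "Lq a a = 1" "Lq b b = 1" "Lq c c = 1" "Lq d d = 1"
     "Lq a b = -1" "Lq a c = -1" "Lq a d = -1" "Lq b c = -1" "Lq b d = -1" "Lq c d = -1"
    using d by (auto simp: desc4_def)
  have n': "Lq b a = -1" "Lq c a = -1" "Lq d a = -1" "Lq c b = -1" "Lq d b = -1" "Lq d c = -1"
    using n by (simp_all add: Lq_sym)
  have dist: "a \<noteq> b" "a \<noteq> c" "a \<noteq> d" "b \<noteq> c" "b \<noteq> d" "c \<noteq> d" using n by auto
  let ?S = "{a, b, c, d}"
  have fin: "finite ?S" by simp
  have card: "card ?S = 4" using dist by simp
  have sumS: "(\<Sum>v\<in>?S. u v *\<^sub>R v) = u a *\<^sub>R a + u b *\<^sub>R b + u c *\<^sub>R c + u d *\<^sub>R d" for u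
    using dist by (simp add: algebra_simps)
  have ind: "independent ?S"
  proof
    assume "dependent ?S"
    then obtain u where u: "\<exists>v\<in>?S. u v \<noteq> 0" "(\<Sum>v\<in>?S. u v *\<^sub>R v) = 0"
      using dependent_finite[OF fin] by blast
    have z: "u a *\<^sub>R a + u b *\<^sub>R b + u c *\<^sub>R c + u d *\<^sub>R d = 0" using u(2) sumS by simp
    have "Lq (u a *\<^sub>R a + u b *\<^sub>R b + u c *\<^sub>R c + u d *\<^sub>R d) x = 0" for x
      unfolding z by (simp add: Lq_def)
    from this[of a] this[of b] this[of c] this[of d]
    have "u a - u b - u c - u d = 0" "- u a + u b - u c - u d = 0" "- u a - u b + u c - u d = 0"
      "- u a - u b - u c + u d = 0"
      unfolding lin4 using n n' by simp_all
    then have "u a = 0" "u b = 0" "u c = 0" "u d = 0" by linarith+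
    then show False using u(1) by auto
  qed
  have "UNIV \<subseteq> span ?S"
    by (rule card_ge_dim_independent) (use ind card in auto)
  then have "e \<in> span ?S" by auto
  then obtain u where u: "e = (\<Sum>v\<in>?S. u v *\<^sub>R v)" using span_finite[OF fin] by auto
  define al where "al = u a"
  define be where "be = u b"
  define ga where "ga = u c"
  define de where "de = u d"
  have eu: "e = al *\<^sub>R a + be *\<^sub>R b + ga *\<^sub>R c + de *\<^sub>R d"
    using u sumS unfolding al_def be_def ga_def de_def by simp
  have "Lq e a = -1" "Lq e b = -1" "Lq e c = -1" using e by (simp_all add: Lq_sym)
  then have l: "al - be - ga - de = -1" "- al + be - ga - de = -1" "- al - be + ga - de = -1"
    unfolding eu lin4 using n n' by simp_all
  then have eqs: "be = al" "ga = al" "de = 1 - al" by linarith+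
  have "Lq e e = al * Lq a e + be * Lq b e + ga * Lq c e + de * Lq d e"
    by (subst (1) eu) (rule lin4)
  also have "Lq d e = al * (-1) + be * (-1) + ga * (-1) + de * 1"
  proof -
    have "Lq d e = Lq e d" by (rule Lq_sym)
    also have "\<dots> = al * Lq a d + be * Lq b d + ga * Lq c d + de * Lq d d"
      by (simp only: eu lin4)
    finally show ?thesis using n by simp
  qed
  finally have "1 = - al - be - ga + de * (- al - be - ga + de)" using e by simp
  then have "al * (al - 2) = 0" using eqs by (simp add: algebra_simps)
  then have "al = 0 \<or> al = 2" by auto
  then show ?thesis
  proof
    assume "al = 0" then show ?thesis using eu eqs by simp
  next
    assume "al = 2" then show ?thesis using eu eqs by (simp add: algebra_simps scaleR_add_right)
  qed
qed



definition rfl4 :: "q4 \<Rightarrow> q4 \<Rightarrow> q4" where "rfl4 t X = X - (2 * Lq t X) *\<^sub>R t"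

definition invp :: "complex \<Rightarrow> real \<Rightarrow> complex \<Rightarrow> complex" where
  "invp c r p = c + (r\<^sup>2) / cnj (p - c)"

lemma div_cnj_coords: "Re (of_real k / cnj w) = k * Re w / ((Re w)^2 + (Im w)^2)"
   "Im (of_real k / cnj w) = k * Im w / ((Re w)^2 + (Im w)^2)"
  by (simp_all add: Re_divide Im_divide power2_eq_square)

lemma invp_coords:
  shows "Re (invp c r p) = Re c + r^2 * (Re p - Re c) / ((Re p - Re c)^2 + (Im p - Im c)^2)"
    "Im (invp c r p) = Im c + r^2 * (Im p - Im c) / ((Re p - Re c)^2 + (Im p - Im c)^2)"
  using div_cnj_coords[of "r^2" "p - c"] by (simp_all add: invp_def)

lemma inv_identity:
  assumes "r > 0" "p \<noteq> c"
  shows "Fq X (invp c r p) * ((Re p - Re c)^2 + (Im p - Im c)^2) = r^2 * Fq (rfl4 (symbol (Disk c r)) X) p"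
proof -
  define D where "D = (Re p - Re c)^2 + (Im p - Im c)^2"
  have D: "D > 0" using assms(2) unfolding D_def
    by (simp add: complex_eq_iff sum_power2_gt_zero_iff)
  have "Fq X (invp c r p) * D = r^2 * Fq (rfl4 (symbol (Disk c r)) X) p"
    using D assms(1) unfolding Fq_def invp_coords D_def[symmetric]
    apply (simp add: rfl4_def Lq_def Let_def power2_eq_square field_simps)
    unfolding D_def power2_eq_square
    apply algebra
    done
  then show ?thesis by (simp add: D_def)
qed

lemma Fq_cont: "closed {p. Fq t p \<le> 0}"
  unfolding Fq_def by (intro closed_Collect_le continuous_intros)

lemma gset_closed: "valid_gdisk G \<Longrightarrow> closed (gset G)"
  using gset_Fq Fq_cont by simp

lemma gset_limpt: assumes "valid_gdisk G" "z \<in> gset G" shows "z islimpt gset G"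
proof (cases G)
  case (Disk c r)
  then have "r > 0" using assms by simp
  then have "gset G = closure (ball c r)" using Disk by simp
  then show ?thesis using islimpt_closure_open[of "ball c r" "gset G" z] assms by simp
next
  case (CoDisk c r)
  then have "r > 0" using assms by simp
  then have "gset G = closure (- cball c r)" using CoDisk by (simp add: closure_complement closed_Compl)
  then show ?thesis using islimpt_closure_open[of "- cball c r" "gset G" z] assms by (simp add: open_Compl)
next
  case (HalfPlane n h)
  then have "n \<noteq> 0" using assms by auto
  have "gset G = {p. n \<bullet> p \<ge> h}" using HalfPlane by (simp add: inner_commute)
  also have "\<dots> = closure {p. n \<bullet> p > h}" using \<open>n \<noteq> 0\<close> by simp
  finally show ?thesis using islimpt_closure_open[of "{p. n \<bullet> p > h}" "gset G" z] assms
    by (simp add: open_halfspace_gt)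
qed

lemma closure_minus_pt: assumes "valid_gdisk G" shows "closure (gset G - {z}) = gset G"
proof
  have "closure (gset G - {z}) \<subseteq> closure (gset G)" by (rule closure_mono) auto
  also have "\<dots> = gset G" using gset_closed[OF assms] by (rule closure_closed)
  finally show "closure (gset G - {z}) \<subseteq> gset G" .
  show "gset G \<subseteq> closure (gset G - {z})"
  proof
    fix x assume x: "x \<in> gset G"
    show "x \<in> closure (gset G - {z})"
    proof (cases "x = z")
      case True
      have "x islimpt gset G" by (rule gset_limpt[OF assms x])
      then show ?thesis using True by (simp add: islimpt_in_closure)
    next
      case False
      then have "x \<in> gset G - {z}" using x by simp
      then show ?thesis using closure_subset by (rule subsetD[rotated])
    qed
  qed
qed

lemma invp_invol: assumes "r > 0" "p \<noteq> c" shows "invp c r p \<noteq> c" "invp c r (invp c r p) = p"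
proof -
  have w: "p - c \<noteq> 0" using assms by simp
  have r2: "complex_of_real (r^2) \<noteq> 0" using assms by simp
  have e1: "invp c r p - c = complex_of_real (r^2) / cnj (p - c)" by (simp add: invp_def)
  moreover have "complex_of_real (r^2) / cnj (p - c) \<noteq> 0" using w r2 by simp
  ultimately show ne: "invp c r p \<noteq> c" by auto
  have "cnj (invp c r p - c) = complex_of_real (r^2) / (p - c)" unfolding e1 by simp
  then have "invp c r (invp c r p) = c + complex_of_real (r^2) / (complex_of_real (r^2) / (p - c))"
    unfolding invp_def by simp
  also have "\<dots> = p" using w r2 by simp
  finally show "invp c r (invp c r p) = p" .
qed

lemma invp_image: assumes "r > 0" shows "invp c r ` (S - {c}) = {q. q \<noteq> c \<and> invp c r q \<in> S}"
proof (intro set_eqI iffI)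
  fix q assume "q \<in> invp c r ` (S - {c})"
  then obtain p where p: "p \<in> S" "p \<noteq> c" "q = invp c r p" by auto
  then show "q \<in> {q. q \<noteq> c \<and> invp c r q \<in> S}" using invp_invol[OF assms p(2)] by auto
next
  fix q assume q: "q \<in> {q. q \<noteq> c \<and> invp c r q \<in> S}"
  then have "q = invp c r (invp c r q)" "invp c r q \<in> S - {c}"
    using invp_invol[OF assms, of q] by auto
  then show "q \<in> invp c r ` (S - {c})" by blast
qed

lemma Lq_diff_left: "Lq (X - k *\<^sub>R t) Y = Lq X Y - k * Lq t Y"
  unfolding Lq_def by (simp add: field_simps)

lemma Lq_neg_left: "Lq (- t) Y = - Lq t Y"
  unfolding Lq_def by (simp add: field_simps)

lemma Lq_rfl4: assumes "Lq t t = 1" shows "Lq (rfl4 t X) (rfl4 t X) = Lq X X"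
proof -
  define k where "k = 2 * Lq t X"
  have "Lq (rfl4 t X) (rfl4 t X) = Lq X (X - k *\<^sub>R t) - k * Lq t (X - k *\<^sub>R t)"
    unfolding rfl4_def k_def[symmetric] by (rule Lq_diff_left)
  also have "Lq X (X - k *\<^sub>R t) = Lq X X - k * Lq t X"
    by (subst Lq_sym, subst Lq_diff_left) (simp add: Lq_sym)
  also have "Lq t (X - k *\<^sub>R t) = Lq t X - k * Lq t t"
    by (subst Lq_sym, subst Lq_diff_left) (simp add: Lq_sym)
  finally show ?thesis using assms unfolding k_def by (simp add: algebra_simps)
qed

lemma rfl4_neg: "rfl4 (- t) X = rfl4 t X"
  unfolding rfl4_def Lq_neg_left by simp

lemma inv_circle:
  assumes r: "r > 0" and vX: "valid_gdisk X"
  shows "closure (invp c r ` (gset X - {c})) = gset (mk (rfl4 (symbol (Disk c r)) (symbol X)))"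
proof -
  let ?t = "symbol (Disk c r)"
  let ?R = "rfl4 ?t (symbol X)"
  have tt: "Lq ?t ?t = 1" using valid_norm[of "Disk c r"] r by simp
  have RR: "Lq ?R ?R = 1" using Lq_rfl4[OF tt] valid_norm[OF vX] by simp
  have mkR: "valid_gdisk (mk ?R)" "symbol (mk ?R) = ?R" using mk_ok[OF RR] by auto
  have gG: "gset (mk ?R) = {q. Fq ?R q \<le> 0}" using gset_Fq[OF mkR(1)] mkR(2) by simp
  have "invp c r ` (gset X - {c}) = {q. q \<noteq> c \<and> invp c r q \<in> gset X}" by (rule invp_image[OF r])
  also have "\<dots> = {q. q \<noteq> c \<and> Fq ?R q \<le> 0}"
  proof (intro Collect_cong conj_cong refl)
    fix q assume q: "q \<noteq> c"
    define D where "D = (Re q - Re c)^2 + (Im q - Im c)^2"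
    have D: "D > 0" using q unfolding D_def by (simp add: complex_eq_iff sum_power2_gt_zero_iff)
    have e: "Fq (symbol X) (invp c r q) * D = r^2 * Fq ?R q" unfolding D_def by (rule inv_identity[OF r q])
    have "invp c r q \<in> gset X \<longleftrightarrow> Fq (symbol X) (invp c r q) \<le> 0" using gset_Fq[OF vX] by simp
    also have "\<dots> \<longleftrightarrow> Fq (symbol X) (invp c r q) * D \<le> 0" using D by (simp add: mult_le_0_iff)
    also have "\<dots> \<longleftrightarrow> Fq ?R q \<le> 0" unfolding e using r by (simp add: mult_le_0_iff)
    finally show "invp c r q \<in> gset X \<longleftrightarrow> Fq ?R q \<le> 0" .
  qed
  also have "\<dots> = gset (mk ?R) - {c}" using gG by auto
  finally show ?thesis using closure_minus_pt[OF mkR(1)] by simp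
qed

definition rho :: "complex \<Rightarrow> real \<Rightarrow> complex \<Rightarrow> complex" where
  "rho n h p = p - (2 * (inner p n - h)) *\<^sub>R n"

lemma rho_invol: assumes "norm n = 1" shows "rho n h (rho n h p) = p"
proof -
  have nn: "inner n n = 1" using assms by (metis power2_norm_eq_inner power_one)
  define a where "a = 2 * (inner p n - h)"
  have r1: "rho n h p = p - a *\<^sub>R n" by (simp add: rho_def a_def)
  have "inner (rho n h p) n = inner p n - a" unfolding r1 using nn by (simp add: inner_diff_left)
  then have eq: "2 * (inner (rho n h p) n - h) = - a" unfolding a_def by simp
  have "rho n h (rho n h p) = rho n h p - (2 * (inner (rho n h p) n - h)) *\<^sub>R n" by (rule rho_def)
  also have "\<dots> = rho n h p - (- a) *\<^sub>R n" by (simp only: eq)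
  also have "\<dots> = p" unfolding r1 by simp
  finally show ?thesis .
qed

lemma rho_image: assumes "norm n = 1" shows "rho n h ` S = {q. rho n h q \<in> S}"
proof (intro set_eqI iffI)
  fix q assume "q \<in> rho n h ` S"
  then obtain p where "p \<in> S" "q = rho n h p" by auto
  then show "q \<in> {q. rho n h q \<in> S}" using rho_invol[OF assms] by simp
next
  fix q assume "q \<in> {q. rho n h q \<in> S}"
  then have "rho n h q \<in> S" by simp
  moreover have "q = rho n h (rho n h q)" using rho_invol[OF assms] by simp
  ultimately show "q \<in> rho n h ` S" by (rule rev_image_eqI)
qed

lemma rho_identity:
  assumes "norm n = 1"
  shows "Fq X (rho n h q) = Fq (rfl4 (symbol (HalfPlane n h)) X) q"
proof -
  have n2: "(Re n)^2 + (Im n)^2 = 1" using assms by (simp add: cmod_def)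
  show ?thesis using n2
    by (simp add: Fq_def rho_def rfl4_def Lq_def inner_complex_def power2_eq_square algebra_simps) algebra
qed

lemma inv_line:
  assumes n: "norm n = 1" and vX: "valid_gdisk X"
  shows "rho n h ` (gset X) = gset (mk (rfl4 (symbol (HalfPlane n h)) (symbol X)))"
proof -
  let ?t = "symbol (HalfPlane n h)"
  let ?R = "rfl4 ?t (symbol X)"
  have tt: "Lq ?t ?t = 1" using valid_norm[of "HalfPlane n h"] n by simp
  have RR: "Lq ?R ?R = 1" using Lq_rfl4[OF tt] valid_norm[OF vX] by simp
  have mkR: "valid_gdisk (mk ?R)" "symbol (mk ?R) = ?R" using mk_ok[OF RR] by auto
  have gG: "gset (mk ?R) = {q. Fq ?R q \<le> 0}" using gset_Fq[OF mkR(1)] mkR(2) by simp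
  have "rho n h ` (gset X) = {q. rho n h q \<in> gset X}" by (rule rho_image[OF n])
  also have "\<dots> = {q. Fq ?R q \<le> 0}"
  proof (intro Collect_cong)
    fix q
    have "rho n h q \<in> gset X \<longleftrightarrow> Fq (symbol X) (rho n h q) \<le> 0" using gset_Fq[OF vX] by blast
    then show "rho n h q \<in> gset X \<longleftrightarrow> Fq ?R q \<le> 0" using rho_identity[OF n] by metis
  qed
  finally show ?thesis using gG by blast
qed

lemma inv_symbol:
  assumes vA: "valid_gdisk A" and vX: "valid_gdisk X" and vX': "valid_gdisk X'"
    and g: "gset X' = inversion_image A (gset X)"
  shows "symbol X' = rfl4 (symbol A) (symbol X)"
proof -
  have "gset X' = gset (mk (rfl4 (symbol A) (symbol X)))"
  proof (cases A)
    case (Disk c r)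
    then have r: "r > 0" using vA by simp
    have "inversion_image A (gset X) = closure (invp c r ` (gset X - {c}))"
      unfolding Disk inversion_image.simps invp_def[abs_def] ..
    then show ?thesis using g inv_circle[OF r vX] unfolding Disk by metis
  next
    case (CoDisk c r)
    then have r: "r > 0" using vA by simp
    have "inversion_image A (gset X) = closure (invp c r ` (gset X - {c}))"
      unfolding CoDisk inversion_image.simps invp_def[abs_def] ..
    moreover have "symbol A = - symbol (Disk c r)" unfolding CoDisk
      by (subst q4_eq) (simp add: Let_def power2_eq_square field_simps)
    ultimately show ?thesis using g inv_circle[OF r vX] rfl4_neg by metis
  next
    case (HalfPlane n h)
    then have n: "norm n = 1" using vA by simp
    have "inversion_image A (gset X) = rho n h ` (gset X)"
      unfolding HalfPlane inversion_image.simps rho_def[abs_def] ..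
    then show ?thesis using g inv_line[OF n vX] unfolding HalfPlane by metis
  qed
  moreover have RR: "Lq (rfl4 (symbol A) (symbol X)) (rfl4 (symbol A) (symbol X)) = 1"
    using Lq_rfl4[OF valid_norm[OF vA]] valid_norm[OF vX] by simp
  ultimately have "X' = mk (rfl4 (symbol A) (symbol X))"
    using gset_inj[OF vX' conjunct1[OF mk_ok[OF RR]]] by metis
  then show ?thesis using conjunct2[OF mk_ok[OF RR]] by metis
qed



lemma vv_ops [simp]: "vv (t + u) = vv t + vv u" "vv (t - u) = vv t - vv u" "vv (- t) = - vv t"
  "vv (k *\<^sub>R t) = of_real k * vv t"
  by (simp_all add: vv_def complex_eq_iff)

lemma sp_ops [simp]:
  "sp t (u + v) = sp t u + sp t v" "sp t (u - v) = sp t u - sp t v" "sp t (k *\<^sub>R u) = of_real k * sp t u"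
  "sp (u + v) t = sp u t + sp v t" "sp (u - v) t = sp u t - sp v t" "sp (k *\<^sub>R u) t = of_real k * sp u t"
  "sp t t = 0" "sp (- u) t = - sp u t" "sp t (- u) = - sp t u"
  by (simp_all add: sp_def algebra_simps)

lemma gi_add: "gaussian_int u \<Longrightarrow> gaussian_int v \<Longrightarrow> gaussian_int (u + v)"
  by (auto simp: gaussian_int_def)
lemma gi_diff: "gaussian_int u \<Longrightarrow> gaussian_int v \<Longrightarrow> gaussian_int (u - v)"
  by (auto simp: gaussian_int_def)
lemma gi_i: "gaussian_int u \<Longrightarrow> gaussian_int (\<i> * u)"
  by (auto simp: gaussian_int_def)
lemma gi_sign: "e = 1 \<or> e = -1 \<Longrightarrow> gaussian_int u \<Longrightarrow> gaussian_int (e * u)"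
  by (auto simp: gaussian_int_def)

lemma G1:
  assumes d: "desc4 P X Y Z" and u: "u^2 = sp P X" "gaussian_int u"
    and v: "v^2 = sp P Y" "gaussian_int v" and w: "w^2 = sp P Z"
  shows "\<exists>s. gaussian_int s \<and> s^2 = sp P (2 *\<^sub>R (P + X + Y) - Z)"
proof -
  obtain e where e: "e = 1 \<or> e = -1" "sp P Z = (u + e * v)^2" using Q4[OF d u(1) v(1) w] by blast
  have "sp P (2 *\<^sub>R (P + X + Y) - Z) = 2 * u^2 + 2 * v^2 - (u + e * v)^2"
    using u(1) v(1) e(2) by (simp add: scaleR_add_right)
  also have "\<dots> = (u - e * v)^2" using e(1) by (auto simp: power2_eq_square algebra_simps)
  finally show ?thesis using gi_diff[OF u(2) gi_sign[OF e(1) v(2)]] by metis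
qed

lemma G2:
  assumes "Lq p p = 1" "Lq x x = 1" "Lq y y = 1" "Lq p x = -1" "Lq p y = -1" "Lq x y = -1"
    and u: "u^2 = sp p x" "gaussian_int u" and v: "v^2 = sp p y" "gaussian_int v"
  shows "\<exists>s. gaussian_int s \<and> s^2 = sp (x + 2 *\<^sub>R p) (y + 2 *\<^sub>R p)"
proof -
  obtain e where e: "e = 1 \<or> e = -1" "sp x y = u^2 - v^2 + e * (2 * \<i> * u * v)"
    using T3_sign[OF assms(1-6) u(1) v(1)] by blast
  have "sp (x + 2 *\<^sub>R p) (y + 2 *\<^sub>R p) = sp x y + 2 * sp x p + 2 * sp p y"
    by simp
  also have "sp x p = - sp p x" by (rule sp_anti)
  also have "sp x y + 2 * - sp p x + 2 * sp p y = (\<i> * u + e * v)^2"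
    using u(1) v(1) e by (auto simp: power2_eq_square algebra_simps)
  finally show ?thesis using gi_add[OF gi_i[OF u(2)] gi_sign[OF e(1) v(2)]] by metis
qed

lemma G3: "u^2 = z \<Longrightarrow> gaussian_int u \<Longrightarrow> \<exists>s. gaussian_int s \<and> s^2 = - z"
  by (intro exI[of _ "\<i> * u"]) (auto simp: gi_i power_mult_distrib)


lemma gs_root: "gaussian_spinor X Y \<Longrightarrow> \<exists>u. gaussian_int u \<and> u^2 = sp (symbol X) (symbol Y)"
  by (auto simp: gaussian_spinor_def spin_sq_sp)

lemma gs_intro: "gaussian_int s \<Longrightarrow> s^2 = sp (symbol X) (symbol Y) \<Longrightarrow> gaussian_spinor X Y"
  by (auto simp: gaussian_spinor_def spin_sq_sp)

theorem mainTheorem6: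
  fixes A B C D :: gdisk
  assumes conf: "descartes_config A B C D"
    and intA: "integral_symbol A" and intB: "integral_symbol B"
    and intC: "integral_symbol C" and intD: "integral_symbol D"
    and spin: "all_spinors_gaussian A B C D"
  shows
    "(\<forall>D'. descartes_conjugate A B C D D' \<longrightarrow>
        descartes_config A B C D' \<and>
        integral_symbol D' \<and>
        symbol D + symbol D' = 2 *\<^sub>R (symbol A + symbol B + symbol C) \<and>
        all_spinors_gaussian A B C D')
     \<and>
     (\<forall>A' B' C' D'.
        valid_gdisk A' \<and> valid_gdisk B' \<and> valid_gdisk C' \<and> valid_gdisk D' \<and>
        gset A' = inversion_image A (gset A) \<and> gset B' = inversion_image A (gset B) \<and>
        gset C' = inversion_image A (gset C) \<and> gset D' = inversion_image A (gset D) \<longrightarrow>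
        symbol A' = - symbol A \<and>
        symbol B' = symbol B + 2 *\<^sub>R symbol A \<and>
        symbol C' = symbol C + 2 *\<^sub>R symbol A \<and>
        symbol D' = symbol D + 2 *\<^sub>R symbol A \<and>
        integral_symbol A' \<and> integral_symbol B' \<and> integral_symbol C' \<and> integral_symbol D' \<and>
        all_spinors_gaussian A' B' C' D')"
proof -
  have vA: "valid_gdisk A" and vB: "valid_gdisk B" and vC: "valid_gdisk C" and vD: "valid_gdisk D"
    and tAB: "tangent A B" and tAC: "tangent A C" and tAD: "tangent A D"
    and tBC: "tangent B C" and tBD: "tangent B D" and tCD: "tangent C D"
    using conf by (auto simp: descartes_config_def)
  define a where "a = symbol A"
  define b where "b = symbol B"
  define c where "c = symbol C"
  define d where "d = symbol D"
  have N: "Lq a a = 1" "Lq b b = 1" "Lq c c = 1" "Lq d d = 1"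
    unfolding a_def b_def c_def d_def using valid_norm vA vB vC vD by auto
  have P: "Lq a b = -1" "Lq a c = -1" "Lq a d = -1" "Lq b c = -1" "Lq b d = -1" "Lq c d = -1"
    unfolding a_def b_def c_def d_def
    using tangent_Lq vA vB vC vD tAB tAC tAD tBC tBD tCD by auto
  have P': "Lq b a = -1" "Lq c a = -1" "Lq d a = -1" "Lq c b = -1" "Lq d b = -1" "Lq d c = -1"
    using P by (simp_all add: Lq_sym)
  have dabcd: "desc4 a b c d" using N P by (simp add: desc4_def)
  have dbacd: "desc4 b a c d" using N P P' by (simp add: desc4_def)
  have dcabd: "desc4 c a b d" using N P P' by (simp add: desc4_def)
  obtain uab where uab: "gaussian_int uab" "uab^2 = sp a b"
    using gs_root spin unfolding all_spinors_gaussian_def a_def b_def by blast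
  obtain uac where uac: "gaussian_int uac" "uac^2 = sp a c"
    using gs_root spin unfolding all_spinors_gaussian_def a_def c_def by blast
  obtain uad where uad: "gaussian_int uad" "uad^2 = sp a d"
    using gs_root spin unfolding all_spinors_gaussian_def a_def d_def by blast
  obtain ubc where ubc: "gaussian_int ubc" "ubc^2 = sp b c"
    using gs_root spin unfolding all_spinors_gaussian_def b_def c_def by blast
  obtain ubd where ubd: "gaussian_int ubd" "ubd^2 = sp b d"
    using gs_root spin unfolding all_spinors_gaussian_def b_def d_def by blast
  obtain ucd where ucd: "gaussian_int ucd" "ucd^2 = sp c d"
    using gs_root spin unfolding all_spinors_gaussian_def c_def d_def by blast
  have iA: "cx a \<in> \<int>" "cy a \<in> \<int>" "ca a \<in> \<int>" "cc a \<in> \<int>"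
    using intA unfolding a_def integral_symbol_iff by auto
  have iB: "cx b \<in> \<int>" "cy b \<in> \<int>" "ca b \<in> \<int>" "cc b \<in> \<int>"
    using intB unfolding b_def integral_symbol_iff by auto
  have iC: "cx c \<in> \<int>" "cy c \<in> \<int>" "ca c \<in> \<int>" "cc c \<in> \<int>"
    using intC unfolding c_def integral_symbol_iff by auto
  have iD: "cx d \<in> \<int>" "cy d \<in> \<int>" "ca d \<in> \<int>" "cc d \<in> \<int>"
    using intD unfolding d_def integral_symbol_iff by auto
  show ?thesis
  proof (rule conjI)
    show "\<forall>D'. descartes_conjugate A B C D D' \<longrightarrow>
        descartes_config A B C D' \<and>
        integral_symbol D' \<and>
        symbol D + symbol D' = 2 *\<^sub>R (symbol A + symbol B + symbol C) \<and>
        all_spinors_gaussian A B C D'"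
    proof (intro allI impI)
      fix D' assume dc: "descartes_conjugate A B C D D'"
      have vD': "valid_gdisk D'" and tAD': "tangent A D'" and tBD': "tangent B D'" and tCD': "tangent C D'"
        and ne: "gset D' \<noteq> gset D"
        using dc by (auto simp: descartes_conjugate_def)
      define e where "e = symbol D'"
      have "Lq e e = 1" unfolding e_def using valid_norm[OF vD'] .
      moreover have "Lq a e = -1" "Lq b e = -1" "Lq c e = -1"
        unfolding a_def b_def c_def e_def using tangent_Lq vA vB vC vD' tAD' tBD' tCD' by auto
      ultimately have "e = d \<or> e = 2 *\<^sub>R (a + b + c) - d" using conj_unique[OF dabcd] by blast
      moreover have "e \<noteq> d"
      proof
        assume "e = d"
        then have "D' = D" using symbol_inj[OF vD' vD] unfolding e_def d_def by blast
        then show False using ne by simp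
      qed
      ultimately have eD: "e = 2 *\<^sub>R (a + b + c) - d" by blast
      have conf': "descartes_config A B C D'"
        using conf vD' tAD' tBD' tCD' by (simp add: descartes_config_def)
      have int': "integral_symbol D'"
        unfolding integral_symbol_iff e_def[symmetric] eD using iA iB iC iD
        by (simp add: Ints_add Ints_diff Ints_mult)
      have sum': "symbol D + symbol D' = 2 *\<^sub>R (symbol A + symbol B + symbol C)"
        unfolding a_def[symmetric] b_def[symmetric] c_def[symmetric] d_def[symmetric] e_def[symmetric] eD
        by simp
      have sAD': "gaussian_spinor A D'"
      proof -
        obtain s where "gaussian_int s" "s^2 = sp a (2 *\<^sub>R (a + b + c) - d)"
          using G1[OF dabcd uab(2,1) uac(2,1) uad(2)] by blast
        then show ?thesis using gs_intro[of s A D'] unfolding a_def[symmetric] e_def[symmetric] eD by blast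
      qed
      have sBD': "gaussian_spinor B D'"
      proof -
        obtain r where r: "gaussian_int r" "r^2 = - sp a b" using G3[OF uab(2,1)] by blast
        have r': "r^2 = sp b a" using r(2) sp_anti[of b a] by simp
        obtain s where "gaussian_int s" "s^2 = sp b (2 *\<^sub>R (b + a + c) - d)"
          using G1[OF dbacd r' r(1) ubc(2,1) ubd(2)] by blast
        moreover have "2 *\<^sub>R (b + a + c) - d = e" unfolding eD by (simp add: algebra_simps)
        ultimately show ?thesis using gs_intro[of s B D'] unfolding b_def[symmetric] e_def[symmetric] by metis
      qed
      have sCD': "gaussian_spinor C D'"
      proof -
        obtain r where r: "gaussian_int r" "r^2 = - sp a c" using G3[OF uac(2,1)] by blast
        have r': "r^2 = sp c a" using r(2) sp_anti[of c a] by simp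
        obtain q where q: "gaussian_int q" "q^2 = - sp b c" using G3[OF ubc(2,1)] by blast
        have q': "q^2 = sp c b" using q(2) sp_anti[of c b] by simp
        obtain s where "gaussian_int s" "s^2 = sp c (2 *\<^sub>R (c + a + b) - d)"
          using G1[OF dcabd r' r(1) q' q(1) ucd(2)] by blast
        moreover have "2 *\<^sub>R (c + a + b) - d = e" unfolding eD by (simp add: algebra_simps)
        ultimately show ?thesis using gs_intro[of s C D'] unfolding c_def[symmetric] e_def[symmetric] by metis
      qed
      have "all_spinors_gaussian A B C D'"
        using spin sAD' sBD' sCD' by (simp add: all_spinors_gaussian_def)
      then show "descartes_config A B C D' \<and> integral_symbol D' \<and>
        symbol D + symbol D' = 2 *\<^sub>R (symbol A + symbol B + symbol C) \<and> all_spinors_gaussian A B C D'"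
        using conf' int' sum' by blast
    qed
  next
    show "\<forall>A' B' C' D'.
        valid_gdisk A' \<and> valid_gdisk B' \<and> valid_gdisk C' \<and> valid_gdisk D' \<and>
        gset A' = inversion_image A (gset A) \<and> gset B' = inversion_image A (gset B) \<and>
        gset C' = inversion_image A (gset C) \<and> gset D' = inversion_image A (gset D) \<longrightarrow>
        symbol A' = - symbol A \<and>
        symbol B' = symbol B + 2 *\<^sub>R symbol A \<and>
        symbol C' = symbol C + 2 *\<^sub>R symbol A \<and>
        symbol D' = symbol D + 2 *\<^sub>R symbol A \<and>
        integral_symbol A' \<and> integral_symbol B' \<and> integral_symbol C' \<and> integral_symbol D' \<and>
        all_spinors_gaussian A' B' C' D'"
    proof (intro allI impI)
      fix A' B' C' D'
      assume H: "valid_gdisk A' \<and> valid_gdisk B' \<and> valid_gdisk C' \<and> valid_gdisk D' \<and>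
        gset A' = inversion_image A (gset A) \<and> gset B' = inversion_image A (gset B) \<and>
        gset C' = inversion_image A (gset C) \<and> gset D' = inversion_image A (gset D)"
      have sA: "symbol A' = - a"
        using inv_symbol[OF vA vA, of A'] H N(1) unfolding a_def by (simp add: rfl4_def scaleR_2)
      have sB: "symbol B' = b + 2 *\<^sub>R a"
        using inv_symbol[OF vA vB, of B'] H P(1) unfolding a_def b_def by (simp add: rfl4_def)
      have sC: "symbol C' = c + 2 *\<^sub>R a"
        using inv_symbol[OF vA vC, of C'] H P(2) unfolding a_def c_def by (simp add: rfl4_def)
      have sD: "symbol D' = d + 2 *\<^sub>R a"
        using inv_symbol[OF vA vD, of D'] H P(3) unfolding a_def d_def by (simp add: rfl4_def)
      have ints: "integral_symbol A' \<and> integral_symbol B' \<and> integral_symbol C' \<and> integral_symbol D'"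
        unfolding integral_symbol_iff sA sB sC sD using iA iB iC iD
        by (simp add: Ints_add Ints_diff Ints_mult)
      have s1: "gaussian_spinor A' X'" if h: "symbol X' = x + 2 *\<^sub>R a" "gaussian_int u" "u^2 = sp a x" for X' x u
      proof -
        obtain s where s: "gaussian_int s" "s^2 = - sp a x" using G3[OF h(3,2)] by blast
        have "sp (- a) (x + 2 *\<^sub>R a) = - sp a x" by simp
        then show ?thesis using gs_intro[of s A' X'] s sA h(1) by simp
      qed
      have s2: "gaussian_spinor X' Y'" if h: "symbol X' = x + 2 *\<^sub>R a" "symbol Y' = y + 2 *\<^sub>R a"
        "Lq x x = 1" "Lq y y = 1" "Lq a x = -1" "Lq a y = -1" "Lq x y = -1"
        "gaussian_int u" "u^2 = sp a x" "gaussian_int v" "v^2 = sp a y" for X' Y' x y u v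
      proof -
        obtain s where "gaussian_int s" "s^2 = sp (x + 2 *\<^sub>R a) (y + 2 *\<^sub>R a)"
          using G2[OF N(1) h(3-7) h(9,8) h(11,10)] by blast
        then show ?thesis using gs_intro[of s X' Y'] h(1,2) by simp
      qed
      have "all_spinors_gaussian A' B' C' D'"
        unfolding all_spinors_gaussian_def
      proof (intro conjI)
        show "gaussian_spinor A' B'" by (rule s1[OF sB uab])
        show "gaussian_spinor A' C'" by (rule s1[OF sC uac])
        show "gaussian_spinor A' D'" by (rule s1[OF sD uad])
        show "gaussian_spinor B' C'" by (rule s2[OF sB sC N(2,3) P(1,2,4) uab uac])
        show "gaussian_spinor B' D'" by (rule s2[OF sB sD N(2,4) P(1,3,5) uab uad])
        show "gaussian_spinor C' D'" by (rule s2[OF sC sD N(3,4) P(2,3,6) uac uad])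
      qed
      then show "symbol A' = - symbol A \<and>
        symbol B' = symbol B + 2 *\<^sub>R symbol A \<and>
        symbol C' = symbol C + 2 *\<^sub>R symbol A \<and>
        symbol D' = symbol D + 2 *\<^sub>R symbol A \<and>
        integral_symbol A' \<and> integral_symbol B' \<and> integral_symbol C' \<and> integral_symbol D' \<and>
        all_spinors_gaussian A' B' C' D'"
        using sA sB sC sD ints unfolding a_def b_def c_def d_def by blast
    qed
  qed
qed

end
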